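(* Consider the entry game with $\mathcal{W}=\{1,2\}$, $\mathcal{X}=\{0,1\}$, $\mathcal{C}(w)=\mathcal{X}$ for all $w$, and $F(m,w,x)=-x(-3m^x\{1\}+w)$. For $q\in[0,1]$ let $\lambda_q=q\delta_2+(1-q)\delta_1$. Then for each $q\in[0,1]$, $\mathcal{M}(\lambda_q)=\{m_q\}$, where $m_q\in\mathcal{P}(\mathcal{W}\times\mathcal{X})$ is given by: if $q\le1/3$, $m_q\{(1,0)\}=2/3$, $m_q\{(1,1)\}=1/3-q$, $m_q\{(2,0)\}=0$, $m_q\{(2,1)\}=q$; if $1/3<q<2/3$, $m_q\{(1,0)\}=1-q$, $m_q\{(1,1)\}=0$, $m_q\{(2,0)\}=0$, $m_q\{(2,1)\}=q$; if $q\ge2/3$, $m_q\{(1,0)\}=1-q$, $m_q\{(1,1)\}=0$, $m_q\{(2,0)\}=q-2/3$, $m_q\{(2,1)\}=2/3$.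
   Context: $m^x$ denotes the second marginal of $m\in\mathcal{P}(\mathcal{W}\times\mathcal{X})$. For $\lambda\in\mathcal{P}(\mathcal{W})$, $\mathcal{M}(\lambda)$ (Cournot-Nash equilibria) is the set of $m\in\mathcal{P}(\mathcal{W}\times\mathcal{X})$ with first marginal $\lambda$ such that for $m$-a.e. $(w,x)$, $x\in\mathcal{C}(w)$ and $F(m,w,x)=\min_{y\in\mathcal{C}(w)}F(m,w,y)$. *)

theory Defs
  imports "HOL-Probability.Probability_Mass_Function"
begin

text \<open>Entry game: type space W = {1,2}, action space X = {0,1}, both embedded in nat.
  Probability measures on W x X are represented as pmfs on nat x nat supported in W x X.\<close>

definition W :: "nat set" where "W = {1, 2}"
definition X :: "nat set" where "X = {0, 1}"

definition C :: "nat \<Rightarrow> nat set" where "C w = X"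

definition marg_x :: "(nat \<times> nat) pmf \<Rightarrow> nat pmf" where
  "marg_x m = map_pmf snd m"

definition F :: "(nat \<times> nat) pmf \<Rightarrow> nat \<Rightarrow> nat \<Rightarrow> real" where
  "F m w x = - real x * (- 3 * measure_pmf.prob (marg_x m) {1} + real w)"

definition CN :: "nat pmf \<Rightarrow> (nat \<times> nat) pmf set" where
  "CN lam = {m. set_pmf m \<subseteq> W \<times> X \<and> map_pmf fst m = lam \<and>
     (AE p in measure_pmf m. snd p \<in> C (fst p) \<and>
        F m (fst p) (snd p) = Min (F m (fst p) ` C (fst p)))}"

definition lam :: "real \<Rightarrow> nat pmf" where
  "lam q = map_pmf (\<lambda>b. if b then 2 else 1) (bernoulli_pmf q)"

definition mq :: "real \<Rightarrow> nat \<Rightarrow> nat \<Rightarrow> real" where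
  "mq q w x =
    (if q \<le> 1/3 then
       (if (w, x) = (1, 0) then 2/3 else if (w, x) = (1, 1) then 1/3 - q
        else if (w, x) = (2, 0) then 0 else if (w, x) = (2, 1) then q else 0)
     else if q < 2/3 then
       (if (w, x) = (1, 0) then 1 - q else if (w, x) = (1, 1) then 0
        else if (w, x) = (2, 0) then 0 else if (w, x) = (2, 1) then q else 0)
     else
       (if (w, x) = (1, 0) then 1 - q else if (w, x) = (1, 1) then 0
        else if (w, x) = (2, 0) then q - 2/3 else if (w, x) = (2, 1) then 2/3 else 0))"

end

theory Submission imports Defs begin

lemma WX_eq: "W \<times> X = {(1,0),(1,1),(2,0),(2,1)}"
  unfolding W_def X_def by auto

lemma meas_sum:
  fixes m :: "(nat\<times>nat) pmf"
  assumes "set_pmf m \<subseteq> W \<times> X"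
  shows "measure m A = sum (pmf m) (A \<inter> (W \<times> X))"
proof -
  have "measure m A = measure m (A \<inter> set_pmf m)" by (simp add: measure_Int_set_pmf)
  also have "A \<inter> set_pmf m = (A \<inter> (W\<times>X)) \<inter> set_pmf m" using assms by auto
  also have "measure m \<dots> = measure m (A \<inter> (W\<times>X))" by (simp add: measure_Int_set_pmf)
  also have "\<dots> = sum (pmf m) (A \<inter> (W \<times> X))"
    by (rule measure_measure_pmf_finite) (simp add: WX_eq)
  finally show ?thesis .
qed

lemma pmf_lam:
  assumes "0 \<le> q" "q \<le> 1"
  shows "pmf (lam q) w = (if w = 1 then 1 - q else if w = 2 then q else 0)"
proof -
  have "pmf (lam q) w = measure (bernoulli_pmf q) ((\<lambda>b. if b then 2 else 1) -` {w})"
    unfolding lam_def by (rule pmf_map)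
  moreover have "(\<lambda>b::bool. if b then 2 else (1::nat)) -` {w} =
     (if w = 1 then {False} else if w = 2 then {True} else {})" by (auto split: if_splits)
  ultimately show ?thesis using assms by (simp add: measure_pmf_single)
qed

lemma marg1:
  assumes "set_pmf m \<subseteq> W \<times> X"
  shows "measure_pmf.prob (marg_x m) {1} = pmf m (1,1) + pmf m (2,1)"
proof -
  have "measure_pmf.prob (marg_x m) {1} = measure m (snd -` {1})"
    unfolding marg_x_def by simp
  also have "\<dots> = sum (pmf m) (snd -` {1} \<inter> (W \<times> X))" by (rule meas_sum[OF assms])
  also have "snd -` {1} \<inter> (W \<times> X) = {(1,1),(2,1)}" unfolding WX_eq by auto
  finally show ?thesis by simp
qed

lemma fst_iff:
  assumes "set_pmf m \<subseteq> W \<times> X" "0 \<le> q" "q \<le> 1"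
  shows "map_pmf fst m = lam q \<longleftrightarrow>
    pmf m (1,0) + pmf m (1,1) = 1 - q \<and> pmf m (2,0) + pmf m (2,1) = q"
proof -
  have e: "pmf (map_pmf fst m) w = sum (pmf m) (fst -` {w} \<inter> (W \<times> X))" for w
    by (simp add: pmf_map meas_sum[OF assms(1)])
  have s1: "fst -` {1::nat} \<inter> (W \<times> X) = {(1,0),(1,1)}" unfolding WX_eq by auto
  have s2: "fst -` {2::nat} \<inter> (W \<times> X) = {(2,0),(2,1)}" unfolding WX_eq by auto
  have s3: "w \<noteq> 1 \<Longrightarrow> w \<noteq> 2 \<Longrightarrow> fst -` {w::nat} \<inter> (W \<times> X) = {}" for w
    unfolding WX_eq by auto
  show ?thesis
    unfolding pmf_eq_iff
  proof
    assume h: "\<forall>i. pmf (map_pmf fst m) i = pmf (lam q) i"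
    show "pmf m (1,0) + pmf m (1,1) = 1 - q \<and> pmf m (2,0) + pmf m (2,1) = q"
      using h[rule_format, of 1] h[rule_format, of 2] unfolding e s1 s2 by (simp add: pmf_lam assms)
  next
    assume h: "pmf m (1,0) + pmf m (1,1) = 1 - q \<and> pmf m (2,0) + pmf m (2,1) = q"
    show "\<forall>i. pmf (map_pmf fst m) i = pmf (lam q) i"
    proof
      fix i show "pmf (map_pmf fst m) i = pmf (lam q) i"
        proof (cases "i = 1")
          case True show ?thesis using h unfolding True e s1 by (simp add: pmf_lam assms)
        next
          case f: False show ?thesis
          proof (cases "i = 2")
            case True show ?thesis using h unfolding True e s2 by (simp add: pmf_lam assms)
          next
            case False then show ?thesis using f unfolding e s3[OF f False] by (simp add: pmf_lam assms)
          qed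
        qed
    qed
  qed
qed

lemma F_min:
  "Min (F m w ` C w) = min 0 (3 * measure_pmf.prob (marg_x m) {1} - real w)"
  "F m w 0 = 0" "F m w 1 = 3 * measure_pmf.prob (marg_x m) {1} - real w"
proof -
  show f0: "F m w 0 = 0" and f1: "F m w 1 = 3 * measure_pmf.prob (marg_x m) {1} - real w"
    unfolding F_def by simp_all
  have "F m w ` C w = {F m w 0, F m w 1}" unfolding C_def X_def by auto
  then show "Min (F m w ` C w) = min 0 (3 * measure_pmf.prob (marg_x m) {1} - real w)"
    unfolding f0 f1 by (simp add: min.commute)
qed

lemma AE_iff:
  assumes "set_pmf m \<subseteq> W \<times> X"
  shows "(AE p in measure_pmf m. snd p \<in> C (fst p) \<and>
        F m (fst p) (snd p) = Min (F m (fst p) ` C (fst p))) \<longleftrightarrow>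
     (pmf m (1,0)>0 \<longrightarrow> 3*(pmf m (1,1) + pmf m (2,1))\<ge>1) \<and> (pmf m (1,1)>0 \<longrightarrow> 3*(pmf m (1,1) + pmf m (2,1))\<le>1) \<and>
     (pmf m (2,0)>0 \<longrightarrow> 3*(pmf m (1,1) + pmf m (2,1))\<ge>2) \<and> (pmf m (2,1)>0 \<longrightarrow> 3*(pmf m (1,1) + pmf m (2,1))\<le>2)"
proof -
  have pos: "y \<in> set_pmf m \<longleftrightarrow> pmf m y > 0" for y
    using pmf_nonneg[of m y] by (auto simp: set_pmf_iff)
  have "(AE p in measure_pmf m. snd p \<in> C (fst p) \<and>
        F m (fst p) (snd p) = Min (F m (fst p) ` C (fst p))) \<longleftrightarrow>
     (\<forall>y\<in>W\<times>X. pmf m y > 0 \<longrightarrow> snd y \<in> C (fst y) \<and>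
        F m (fst y) (snd y) = Min (F m (fst y) ` C (fst y)))"
    unfolding AE_measure_pmf_iff using assms pos by blast
  also have "\<dots> \<longleftrightarrow> (\<forall>y\<in>W\<times>X. pmf m y > 0 \<longrightarrow>
        F m (fst y) (snd y) = min 0 (3 * (pmf m (1,1) + pmf m (2,1)) - real (fst y)))"
    unfolding F_min(1) marg1[OF assms] by (auto simp: C_def)
  also have "\<dots> \<longleftrightarrow> (pmf m (1,0)>0 \<longrightarrow> 3*(pmf m (1,1) + pmf m (2,1))\<ge>1) \<and> (pmf m (1,1)>0 \<longrightarrow> 3*(pmf m (1,1) + pmf m (2,1))\<le>1) \<and>
     (pmf m (2,0)>0 \<longrightarrow> 3*(pmf m (1,1) + pmf m (2,1))\<ge>2) \<and> (pmf m (2,1)>0 \<longrightarrow> 3*(pmf m (1,1) + pmf m (2,1))\<le>2)"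
  proof -
    have mg: "measure_pmf.prob (marg_x m) {Suc 0} = pmf m (Suc 0, Suc 0) + pmf m (2, Suc 0)"
      using marg1[OF assms] by simp
    show ?thesis unfolding WX_eq by (auto simp: F_def mg min_def)
  qed
  finally show ?thesis .
qed
lemma key:
  fixes a b c d q p :: real
  assumes "0\<le>a" "0\<le>b" "0\<le>c" "0\<le>d" "a+b=1-q" "c+d=q" "0\<le>q" "q\<le>1" "p=b+d"
    "a>0 \<longrightarrow> 3*p\<ge>1" "b>0 \<longrightarrow> 3*p\<le>1" "c>0 \<longrightarrow> 3*p\<ge>2" "d>0 \<longrightarrow> 3*p\<le>2"
  shows "a = mq q 1 0 \<and> b = mq q 1 1 \<and> c = mq q 2 0 \<and> d = mq q 2 1"
  using assms unfolding mq_def by (cases "a>0"; cases "b>0"; cases "c>0"; cases "d>0"; simp; linarith)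

lemma key2:
  fixes q :: real assumes "0\<le>q" "q\<le>1"
  defines "p \<equiv> mq q 1 1 + mq q 2 1"
  shows "0\<le>mq q 1 0 \<and> 0\<le>mq q 1 1 \<and> 0\<le>mq q 2 0 \<and> 0\<le>mq q 2 1 \<and>
    mq q 1 0 + mq q 1 1 = 1-q \<and> mq q 2 0 + mq q 2 1 = q \<and>
    (mq q 1 0>0 \<longrightarrow> 3*p\<ge>1) \<and> (mq q 1 1>0 \<longrightarrow> 3*p\<le>1) \<and> (mq q 2 0>0 \<longrightarrow> 3*p\<ge>2) \<and> (mq q 2 1>0 \<longrightarrow> 3*p\<le>2)"
  using assms unfolding mq_def by auto

lemma CN_iff:
  assumes "0 \<le> q" "q \<le> 1"
  shows "m \<in> CN (lam q) \<longleftrightarrow> set_pmf m \<subseteq> W \<times> X \<and>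
    pmf m (1,0) + pmf m (1,1) = 1 - q \<and> pmf m (2,0) + pmf m (2,1) = q \<and>
     (pmf m (1,0)>0 \<longrightarrow> 3*(pmf m (1,1) + pmf m (2,1))\<ge>1) \<and> (pmf m (1,1)>0 \<longrightarrow> 3*(pmf m (1,1) + pmf m (2,1))\<le>1) \<and>
     (pmf m (2,0)>0 \<longrightarrow> 3*(pmf m (1,1) + pmf m (2,1))\<ge>2) \<and> (pmf m (2,1)>0 \<longrightarrow> 3*(pmf m (1,1) + pmf m (2,1))\<le>2)"
  unfolding CN_def using fst_iff[OF _ assms] AE_iff by blast

theorem proposition3p13:
  fixes q :: real
  assumes "0 \<le> q" and "q \<le> 1"
  shows "\<exists>m. (\<forall>w x. pmf m (w, x) = mq q w x) \<and> CN (lam q) = {m}"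
proof -
  define xs where "xs = [((1::nat,0::nat),mq q 1 0),((1,1),mq q 1 1),((2,0),mq q 2 0),((2,1),mq q 2 1)]"
  have K: "0\<le>mq q 1 0 \<and> 0\<le>mq q 1 1 \<and> 0\<le>mq q 2 0 \<and> 0\<le>mq q 2 1 \<and>
    mq q 1 0 + mq q 1 1 = 1-q \<and> mq q 2 0 + mq q 2 1 = q \<and>
    (mq q 1 0>0 \<longrightarrow> 3*(mq q 1 1 + mq q 2 1)\<ge>1) \<and> (mq q 1 1>0 \<longrightarrow> 3*(mq q 1 1 + mq q 2 1)\<le>1) \<and>
    (mq q 2 0>0 \<longrightarrow> 3*(mq q 1 1 + mq q 2 1)\<ge>2) \<and> (mq q 2 1>0 \<longrightarrow> 3*(mq q 1 1 + mq q 2 1)\<le>2)"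
    using key2[OF assms] by simp
  have wf: "pmf_of_list_wf xs"
    unfolding pmf_of_list_wf_def xs_def using K by auto
  define m0 where "m0 = pmf_of_list xs"
  have p10: "pmf m0 (1,0) = mq q 1 0"
  proof -
    have "pmf m0 (1,0) = sum_list (map snd (filter (\<lambda>z. fst z = (1,0)) xs))" unfolding m0_def by (rule pmf_pmf_of_list[OF wf])
    also have "\<dots> = mq q 1 0" unfolding xs_def by simp
    finally show ?thesis .
  qed
  have p11: "pmf m0 (1,1) = mq q 1 1"
  proof -
    have "pmf m0 (1,1) = sum_list (map snd (filter (\<lambda>z. fst z = (1,1)) xs))" unfolding m0_def by (rule pmf_pmf_of_list[OF wf])
    also have "\<dots> = mq q 1 1" unfolding xs_def by simp
    finally show ?thesis .
  qed
  have p20: "pmf m0 (2,0) = mq q 2 0"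
  proof -
    have "pmf m0 (2,0) = sum_list (map snd (filter (\<lambda>z. fst z = (2,0)) xs))" unfolding m0_def by (rule pmf_pmf_of_list[OF wf])
    also have "\<dots> = mq q 2 0" unfolding xs_def by simp
    finally show ?thesis .
  qed
  have p21: "pmf m0 (2,1) = mq q 2 1"
  proof -
    have "pmf m0 (2,1) = sum_list (map snd (filter (\<lambda>z. fst z = (2,1)) xs))" unfolding m0_def by (rule pmf_pmf_of_list[OF wf])
    also have "\<dots> = mq q 2 1" unfolding xs_def by simp
    finally show ?thesis .
  qed
  have pm: "pmf m0 (w, x) = mq q w x" for w x
  proof (cases "(w,x) \<in> {(1,0),(1,1),(2,0),(2,1)}")
    case True
    then have "(w=1 \<and> x=0) \<or> (w=1 \<and> x=1) \<or> (w=2 \<and> x=0) \<or> (w=2 \<and> x=1)" by blast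
    then show ?thesis
    proof (elim disjE conjE)
      assume a: "w = 1" "x = 0" show ?thesis unfolding a by (rule p10)
    next
      assume a: "w = 1" "x = 1" show ?thesis unfolding a by (rule p11)
    next
      assume a: "w = 2" "x = 0" show ?thesis unfolding a by (rule p20)
    next
      assume a: "w = 2" "x = 1" show ?thesis unfolding a by (rule p21)
    qed
  next
    case False
    have P: "pmf m0 (w, x) = sum_list (map snd (filter (\<lambda>z. fst z = (w,x)) xs))"
      unfolding m0_def by (rule pmf_pmf_of_list[OF wf])
    from False have "filter (\<lambda>z. fst z = (w,x)) xs = []" unfolding xs_def by auto
    moreover have "mq q w x = 0" using False unfolding mq_def by auto
    ultimately show ?thesis unfolding P by simp
  qed
  have sup: "set_pmf m0 \<subseteq> W \<times> X"
    using set_pmf_of_list[OF wf] unfolding m0_def WX_eq xs_def by auto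
  have inm0: "m0 \<in> CN (lam q)"
    unfolding CN_iff[OF assms] pm using sup K by simp
  have uniq: "m = m0" if "m \<in> CN (lam q)" for m
  proof (rule pmf_eqI)
    fix y :: "nat \<times> nat"
    have h: "set_pmf m \<subseteq> W \<times> X \<and>
    pmf m (1,0) + pmf m (1,1) = 1 - q \<and> pmf m (2,0) + pmf m (2,1) = q \<and>
     (pmf m (1,0)>0 \<longrightarrow> 3*(pmf m (1,1) + pmf m (2,1))\<ge>1) \<and> (pmf m (1,1)>0 \<longrightarrow> 3*(pmf m (1,1) + pmf m (2,1))\<le>1) \<and>
     (pmf m (2,0)>0 \<longrightarrow> 3*(pmf m (1,1) + pmf m (2,1))\<ge>2) \<and> (pmf m (2,1)>0 \<longrightarrow> 3*(pmf m (1,1) + pmf m (2,1))\<le>2)"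
      using that CN_iff[OF assms] by blast
    have E: "pmf m (1,0) = mq q 1 0 \<and> pmf m (1,1) = mq q 1 1 \<and> pmf m (2,0) = mq q 2 0 \<and> pmf m (2,1) = mq q 2 1"
      by (rule key[OF pmf_nonneg pmf_nonneg pmf_nonneg pmf_nonneg _ _ assms refl]; use h in blast)
    show "pmf m y = pmf m0 y"
    proof (cases "y \<in> W \<times> X")
      case True
      then have "y=(1,0) \<or> y=(1,1) \<or> y=(2,0) \<or> y=(2,1)" unfolding WX_eq by blast
      then show ?thesis
      proof (elim disjE)
        assume a: "y = (1,0)" show ?thesis unfolding a p10 using E by blast
      next
        assume a: "y = (1,1)" show ?thesis unfolding a p11 using E by blast
      next
        assume a: "y = (2,0)" show ?thesis unfolding a p20 using E by blast
      next
        assume a: "y = (2,1)" show ?thesis unfolding a p21 using E by blast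
      qed
    next
      case False
      then have "y \<notin> set_pmf m" "y \<notin> set_pmf m0" using h sup by auto
      then have "pmf m y = 0" "pmf m0 y = 0" unfolding set_pmf_iff by blast+
      then show ?thesis by simp
    qed
  qed
  show ?thesis
  proof (intro exI conjI allI)
    show "pmf m0 (w, x) = mq q w x" for w x by (rule pm)
    show "CN (lam q) = {m0}" using inm0 uniq by blast
  qed
qed

end
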